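(* Let $N\ge 0$, $k\ge1$ be integers and $f:\{0,\dots,N\}^k\to\{\mathbf{true},\mathbf{false}\}$ a feasibility function, and run $\textsc{ParetoEnumerate}(N,k,f)$ (with arbitrary choices of the picked element in each iteration). Once some evaluation of $f$ during the run has returned $\mathbf{true}$ at a point $\vec x$, the algorithm never afterwards evaluates $f$ at any point $\vec y$ with $\vec x\le_k\vec y$.
   Context: For $\vec x,\vec x'\in\{0,\dots,N\}^k$, $\vec x\le_k\vec x'$ iff $x_i\le x'_i$ for all $i$; $\vec x$ is smaller than $\vec x'$ (and $\vec x'$ greater than $\vec x$) if $\vec x\le_k\vec x'$ and $\vec x\neq\vec x'$. A feasibility function is a monotone $f:\{0,\dots,N\}^k\to\{\mathbf{true},\mathbf{false}\}$: if $f(\vec x)=\mathbf{true}$ then $f(\vec x')=\mathbf{true}$ for all $\vec x'$ greater than $\vec x$. Procedure $\textsc{SearchParetoPoint}(\vec x,k,f)$: for $i=1,\dots,k$: set $\mathit{max}:=x_i+1$, $\mathit{min}:=0$; while $\mathit{max}-\mathit{min}>1$: $\mathit{mid}:=\mathit{min}+\lfloor(\mathit{max}-\mathit{min}-1)/2\rfloor$, $x_i:=\mathit{mid}$, and if $f(\vec x)=\mathbf{true}$ then $\mathit{max}:=\mathit{mid}+1$ else $\mathit{min}:=\mathit{mid}+1$; then $x_i:=\mathit{min}$. Return $\vec x$. Procedure $\textsc{ParetoEnumerate}(N,k,f)$: initialize $S:=\{(N,\dots,N)\}$ and $P:=\emptyset$. Main loop: while $S\neq\emptyset$: pick (without removing)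 some $\vec x\in S$; if $f(\vec x)=\mathbf{true}$, then set $\vec x:=\textsc{SearchParetoPoint}(\vec x,k,f)$, set $P:=P\cup\{\vec x\}$, set $S':=\emptyset$, and for each $\vec y\in S$: if not $\vec x\le_k\vec y$, add $\vec y$ to $S'$; otherwise, for each $i\in\{1,\dots,k\}$ with $x_i>0$, add $(y_1,\dots,y_{i-1},x_i-1,y_{i+1},\dots,y_k)$ to $S'$; then set $S$ to the set of elements of $S'$ that are not smaller than any other element of $S'$. Otherwise (if $f(\vec x)=\mathbf{false}$), set $S:=S\setminus\{\vec x\}$. When the loop ends, return $P$. The evaluations of $f$ made during the run are exactly the test $f(\vec x)$ on the picked element in each main-loop iteration and the tests inside $\textsc{SearchParetoPoint}$. *)

theory Defs
  imports Main
begin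

text \<open>Points of \{0..N\}^k are represented as lists of naturals of length k
  (coordinate i of the paper is list index i-1).\<close>

definition grid :: "nat \<Rightarrow> nat \<Rightarrow> nat list set" where
  "grid N k = {x. length x = k \<and> (\<forall>i<k. x ! i \<le> N)}"

definition leqk :: "nat list \<Rightarrow> nat list \<Rightarrow> bool" where
  "leqk x y \<longleftrightarrow> length x = length y \<and> (\<forall>i<length x. x ! i \<le> y ! i)"

definition smallerk :: "nat list \<Rightarrow> nat list \<Rightarrow> bool" where
  "smallerk x y \<longleftrightarrow> leqk x y \<and> x \<noteq> y"

definition feasible :: "nat \<Rightarrow> nat \<Rightarrow> (nat list \<Rightarrow> bool) \<Rightarrow> bool" where
  "feasible N k f \<longleftrightarrow> (\<forall>x\<in>grid N k. \<forall>y\<in>grid N k. f x \<longrightarrow> smallerk x y \<longrightarrow> f y)"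

text \<open>Inner binary-search loop of SearchParetoPoint on coordinate i, starting
  from min = lo, max = hi. Returns the final min and the list of evaluations
  (point, result) performed, in order.\<close>
function bsearch :: "(nat list \<Rightarrow> bool) \<Rightarrow> nat list \<Rightarrow> nat \<Rightarrow> nat \<Rightarrow> nat
    \<Rightarrow> nat \<times> (nat list \<times> bool) list" where
  "bsearch f x i lo hi =
     (if hi - lo > 1 then
        (let mid = lo + (hi - lo - 1) div 2;
             x' = x[i := mid];
             b = f x';
             (r, tr) = (if b then bsearch f x' i lo (mid + 1) else bsearch f x' i (mid + 1) hi)
         in (r, (x', b) # tr))
      else (lo, []))"
  by pat_completeness auto
termination
  by (relation "measure (\<lambda>(f, x, i, lo, hi). hi - lo)") auto

fun spp_aux :: "(nat list \<Rightarrow> bool) \<Rightarrow> nat list \<Rightarrow> nat list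
    \<Rightarrow> nat list \<times> (nat list \<times> bool) list" where
  "spp_aux f x [] = (x, [])"
| "spp_aux f x (i # is) =
     (let (m, tr) = bsearch f x i 0 (x ! i + 1);
          (r, tr') = spp_aux f (x[i := m]) is
      in (r, tr @ tr'))"

definition search_pareto_point :: "(nat list \<Rightarrow> bool) \<Rightarrow> nat list
    \<Rightarrow> nat list \<times> (nat list \<times> bool) list" where
  "search_pareto_point f x = spp_aux f x [0..<length x]"

definition split_set :: "nat \<Rightarrow> nat list \<Rightarrow> nat list set \<Rightarrow> nat list set" where
  "split_set k x S =
     {y \<in> S. \<not> leqk x y} \<union>
     {y[i := x ! i - 1] | y i. y \<in> S \<and> leqk x y \<and> i < k \<and> x ! i > 0}"

definition maximal_elems :: "nat list set \<Rightarrow> nat list set" where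
  "maximal_elems S' = {y \<in> S'. \<not> (\<exists>z\<in>S'. smallerk y z)}"

text \<open>States of ParetoEnumerate: (S, P, trace of all evaluations of f so far).
  One step = one iteration of the main loop, with an arbitrary picked element.\<close>
type_synonym pe_state = "nat list set \<times> nat list set \<times> (nat list \<times> bool) list"

inductive pe_step :: "nat \<Rightarrow> nat \<Rightarrow> (nat list \<Rightarrow> bool) \<Rightarrow> pe_state \<Rightarrow> pe_state \<Rightarrow> bool"
  for N k f where
  feasible_pick:
    "\<lbrakk> x \<in> S; f x; search_pareto_point f x = (x', tr1) \<rbrakk> \<Longrightarrow>
     pe_step N k f (S, P, tr)
       (maximal_elems (split_set k x' S), insert x' P, tr @ [(x, True)] @ tr1)"
| infeasible_pick:
    "\<lbrakk> x \<in> S; \<not> f x \<rbrakk> \<Longrightarrow>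
     pe_step N k f (S, P, tr) (S - {x}, P, tr @ [(x, False)])"

definition pe_init :: "nat \<Rightarrow> nat \<Rightarrow> pe_state" where
  "pe_init N k = ({replicate k N}, {}, [])"

end

theory Submission
  imports Defs
begin

lemma bsearch_prop:
  "lo < hi \<Longrightarrow> i < length x \<Longrightarrow> bsearch f x i lo hi = (r, tr) \<Longrightarrow>
   lo \<le> r \<and> r < hi \<and> (\<forall>e\<in>set tr. \<exists>v. fst e = x[i:=v] \<and> lo \<le> v \<and> v + 1 < hi)
   \<and> (\<forall>e\<in>set tr. snd e \<longrightarrow> r \<le> fst e ! i)
   \<and> (\<forall>a b. a < b \<longrightarrow> b < length tr \<longrightarrow> snd (tr!a) \<longrightarrow> fst (tr!b) ! i < fst (tr!a) ! i)"
proof (induction f x i lo hi arbitrary: r tr rule: bsearch.induct)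
  case (1 f x i lo hi)
  show ?case
  proof (cases "1 < hi - lo")
    case False
    then have "bsearch f x i lo hi = (lo, [])" by (subst bsearch.simps) (simp del: bsearch.simps)
    then show ?thesis using 1 by (simp del: bsearch.simps)
  next
    case True
    define mid where "mid = lo + (hi - lo - 1) div 2"
    define x' where "x' = x[i := mid]"
    have mb: "lo \<le> mid" "mid + 1 < hi" using True unfolding mid_def by (auto simp del: bsearch.simps)
    have lx: "i < length x'" using 1 unfolding x'_def by (simp del: bsearch.simps)
    have x'i: "x' ! i = mid" using 1 unfolding x'_def by (simp del: bsearch.simps)
    have upd: "\<And>v. x'[i:=v] = x[i:=v]" unfolding x'_def by (simp del: bsearch.simps)
    show ?thesis
    proof (cases "f x'")
      case T: True
      obtain r' tr' where rec: "bsearch f x' i lo (mid+1) = (r', tr')" by (fastforce simp del: bsearch.simps)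
      have eq: "bsearch f x i lo hi = (r', (x', True) # tr')"
        by (subst bsearch.simps, simp only: if_P[OF True] Let_def mid_def[symmetric] x'_def[symmetric] T if_True if_False rec) (simp del: bsearch.simps)
      have IH: "lo \<le> r' \<and> r' < mid + 1 \<and> (\<forall>e\<in>set tr'. \<exists>v. fst e = x'[i:=v] \<and> lo \<le> v \<and> v + 1 < mid + 1)
        \<and> (\<forall>e\<in>set tr'. snd e \<longrightarrow> r' \<le> fst e ! i)
        \<and> (\<forall>a b. a < b \<longrightarrow> b < length tr' \<longrightarrow> snd (tr'!a) \<longrightarrow> fst (tr'!b) ! i < fst (tr'!a) ! i)"
        using 1(1)[OF True mid_def x'_def refl T _ lx rec] mb by (simp del: bsearch.simps)
      have rr: "r = r'" "tr = (x', True) # tr'" using eq 1(5) by (auto simp del: bsearch.simps)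
      have ord: "\<forall>a b. a < b \<longrightarrow> b < length tr \<longrightarrow> snd (tr!a) \<longrightarrow> fst (tr!b) ! i < fst (tr!a) ! i"
      proof (intro allI impI)
        fix a b assume ab: "a < b" "b < length tr" "snd (tr!a)"
        show "fst (tr!b) ! i < fst (tr!a) ! i"
        proof (cases a)
          case 0
          obtain b' where b': "b = Suc b'" using ab by (cases b) auto
          then have "tr'!b' \<in> set tr'" using ab rr by (simp del: bsearch.simps)
          then obtain v where "fst (tr'!b') = x'[i:=v]" "v < mid" using IH by (fastforce simp del: bsearch.simps)
          then show ?thesis using 0 b' rr lx x'i by (simp del: bsearch.simps)
        next
          case (Suc a')
          then show ?thesis using IH ab rr by (cases b) auto
        qed
      qed
      have "\<forall>e\<in>set tr'. \<exists>v. fst e = x[i:=v] \<and> lo \<le> v \<and> v + 1 < hi"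
        using IH mb by (fastforce simp: upd simp del: bsearch.simps)
      then show ?thesis using IH rr mb ord upd x'i x'_def by (auto simp del: bsearch.simps)
    next
      case F: False
      obtain r' tr' where rec: "bsearch f x' i (mid+1) hi = (r', tr')" by (fastforce simp del: bsearch.simps)
      have eq: "bsearch f x i lo hi = (r', (x', False) # tr')"
        by (subst bsearch.simps, simp only: if_P[OF True] Let_def mid_def[symmetric] x'_def[symmetric] F if_True if_False rec) (simp del: bsearch.simps)
      have IH: "mid + 1 \<le> r' \<and> r' < hi \<and> (\<forall>e\<in>set tr'. \<exists>v. fst e = x'[i:=v] \<and> mid + 1 \<le> v \<and> v + 1 < hi)
        \<and> (\<forall>e\<in>set tr'. snd e \<longrightarrow> r' \<le> fst e ! i)
        \<and> (\<forall>a b. a < b \<longrightarrow> b < length tr' \<longrightarrow> snd (tr'!a) \<longrightarrow> fst (tr'!b) ! i < fst (tr'!a) ! i)"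
        using 1(2)[OF True mid_def x'_def refl F _ lx rec] mb by (simp del: bsearch.simps)
      have rr: "r = r'" "tr = (x', False) # tr'" using eq 1(5) by (auto simp del: bsearch.simps)
      have ord: "\<forall>a b. a < b \<longrightarrow> b < length tr \<longrightarrow> snd (tr!a) \<longrightarrow> fst (tr!b) ! i < fst (tr!a) ! i"
      proof (intro allI impI)
        fix a b assume ab: "a < b" "b < length tr" "snd (tr!a)"
        show "fst (tr!b) ! i < fst (tr!a) ! i"
        proof (cases a)
          case 0
          then show ?thesis using ab rr by (simp del: bsearch.simps)
        next
          case (Suc a')
          then show ?thesis using IH ab rr by (cases b) auto
        qed
      qed
      have "\<forall>e\<in>set tr'. \<exists>v. fst e = x[i:=v] \<and> lo \<le> v \<and> v + 1 < hi"
        using IH mb by (fastforce simp: upd simp del: bsearch.simps)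
      then show ?thesis using IH rr mb ord x'_def by (auto simp del: bsearch.simps)
    qed
  qed
qed

definition good :: "(nat list \<times> bool) list \<Rightarrow> bool" where
  "good tr \<longleftrightarrow> (\<forall>a b. a < b \<longrightarrow> b < length tr \<longrightarrow> snd (tr!a) \<longrightarrow> \<not> leqk (fst (tr!a)) (fst (tr!b)))"

lemma good_append:
  assumes "good A" "good B" "\<And>e w. e \<in> set A \<Longrightarrow> snd e \<Longrightarrow> w \<in> set B \<Longrightarrow> \<not> leqk (fst e) (fst w)"
  shows "good (A @ B)"
  unfolding good_def
proof (intro allI impI)
  fix a b assume ab: "a < b" "b < length (A @ B)" "snd ((A @ B) ! a)"
  show "\<not> leqk (fst ((A @ B) ! a)) (fst ((A @ B) ! b))"
  proof (cases "b < length A")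
    case True
    then show ?thesis using assms(1) ab by (auto simp: good_def nth_append)
  next
    case bF: False
    show ?thesis
    proof (cases "a < length A")
      case True
      then have "A ! a \<in> set A" "B ! (b - length A) \<in> set B" using bF ab by auto
      then show ?thesis using assms(3) True bF ab by (auto simp: nth_append)
    next
      case False
      have "a - length A < b - length A" "b - length A < length B" using False bF ab by auto
      then show ?thesis using assms(2) False bF ab unfolding good_def
        by (auto simp: nth_append)
    qed
  qed
qed

lemma leqk_trans: "leqk a b \<Longrightarrow> leqk b c \<Longrightarrow> leqk a c"
  unfolding leqk_def by (metis le_trans)

lemma leqk_refl: "leqk a a" unfolding leqk_def by simp

lemma leqk_upd: "v \<le> x ! i \<Longrightarrow> leqk (x[i:=v]) x"
  unfolding leqk_def by (metis length_list_update nth_list_update nth_list_update_neq order_refl)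

lemma leqk_upd2: "a \<le> b \<Longrightarrow> leqk (x[i:=a]) (x[i:=b])"
  unfolding leqk_def by (metis length_list_update nth_list_update nth_list_update_neq order_refl)

lemma not_leqk: "j < length x \<Longrightarrow> y ! j < x ! j \<Longrightarrow> \<not> leqk x y"
  unfolding leqk_def by (metis not_le)

lemma spp_prop:
  "distinct is \<Longrightarrow> set is \<subseteq> {..<length x} \<Longrightarrow> spp_aux f x is = (r, tr) \<Longrightarrow>
   length r = length x \<and> leqk r x \<and> (\<forall>e\<in>set tr. leqk (fst e) x \<and> (\<exists>j\<in>set is. fst e ! j < x ! j))
   \<and> (\<forall>e\<in>set tr. snd e \<longrightarrow> leqk r (fst e)) \<and> good tr"
proof (induction f x "is" arbitrary: r tr rule: spp_aux.induct)
  case (1 f x)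
  then show ?case by (auto simp: leqk_refl good_def)
next
  case (2 f x i "is")
  obtain m tr0 where b: "bsearch f x i 0 (x!i+1) = (m, tr0)" by (fastforce simp del: bsearch.simps)
  obtain r' tr' where s: "spp_aux f (x[i:=m]) is = (r', tr')" by fastforce
  have rr: "r = r'" "tr = tr0 @ tr'" using 2(4) b s by auto
  have il: "i < length x" "i \<notin> set is" using 2(2,3) by auto
  have B: "0 \<le> m \<and> m < x!i+1 \<and> (\<forall>e\<in>set tr0. \<exists>v. fst e = x[i:=v] \<and> 0 \<le> v \<and> v + 1 < x!i+1)
   \<and> (\<forall>e\<in>set tr0. snd e \<longrightarrow> m \<le> fst e ! i)
   \<and> (\<forall>a b. a < b \<longrightarrow> b < length tr0 \<longrightarrow> snd (tr0!a) \<longrightarrow> fst (tr0!b) ! i < fst (tr0!a) ! i)"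
    using bsearch_prop[OF _ il(1) b] by simp
  have IH: "length r' = length x \<and> leqk r' (x[i:=m]) \<and> (\<forall>e\<in>set tr'. leqk (fst e) (x[i:=m]) \<and> (\<exists>j\<in>set is. fst e ! j < x[i:=m] ! j))
   \<and> (\<forall>e\<in>set tr'. snd e \<longrightarrow> leqk r' (fst e)) \<and> good tr'"
    using 2(1)[OF b[symmetric] refl, of r' tr'] 2(2,3) s by simp
  have xm: "leqk (x[i:=m]) x" using B by (intro leqk_upd) simp
  have g0: "good tr0" unfolding good_def
  proof (intro allI impI)
    fix a b assume ab: "a < b" "b < length tr0" "snd (tr0!a)"
    have "tr0!a \<in> set tr0" using ab by simp
    then obtain v where "fst (tr0!a) = x[i:=v]" using B by blast
    then have "i < length (fst (tr0!a))" using il by simp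
    then show "\<not> leqk (fst (tr0!a)) (fst (tr0!b))" using B ab not_leqk by blast
  qed
  have cross: "\<not> leqk (fst e) (fst w)" if e: "e \<in> set tr0" "snd e" and w: "w \<in> set tr'" for e w
  proof -
    obtain v where v: "fst e = x[i:=v]" using B e by blast
    obtain j where j: "j \<in> set is" "fst w ! j < x[i:=m] ! j" using IH w by blast
    have "j \<noteq> i" "j < length x" using j il 2(3) by auto
    then show ?thesis using v j by (intro not_leqk) auto
  qed
  have e0: "\<forall>e\<in>set tr0. leqk (fst e) x \<and> (\<exists>j\<in>set (i#is). fst e ! j < x ! j)"
  proof
    fix e assume "e \<in> set tr0"
    then obtain v where v: "fst e = x[i:=v]" "v < x!i" using B by fastforce
    then show "leqk (fst e) x \<and> (\<exists>j\<in>set (i#is). fst e ! j < x ! j)"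
      using il by (auto intro: leqk_upd)
  qed
  have e1: "\<forall>e\<in>set tr'. leqk (fst e) x \<and> (\<exists>j\<in>set (i#is). fst e ! j < x ! j)"
  proof
    fix e assume e: "e \<in> set tr'"
    then obtain j where j: "j \<in> set is" "fst e ! j < x[i:=m] ! j" using IH by blast
    have "j \<noteq> i" using j il by auto
    then show "leqk (fst e) x \<and> (\<exists>j\<in>set (i#is). fst e ! j < x ! j)"
      using j e IH xm leqk_trans[of "fst e" "x[i:=m]" x] by auto
  qed
  have t0: "\<forall>e\<in>set tr0. snd e \<longrightarrow> leqk r' (fst e)"
  proof (intro ballI impI)
    fix e assume e: "e \<in> set tr0" "snd e"
    then obtain v where v: "fst e = x[i:=v]" using B by blast
    have "m \<le> v" using B e v il by fastforce
    then show "leqk r' (fst e)" using IH v leqk_upd2 leqk_trans by metis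
  qed
  have "good tr" unfolding rr(2) by (rule good_append[OF g0]) (use IH cross in auto)
  moreover have "leqk r x" using rr IH xm leqk_trans by blast
  moreover have "\<forall>e\<in>set tr. snd e \<longrightarrow> leqk r (fst e)" using rr IH t0 by auto
  moreover have "\<forall>e\<in>set tr. leqk (fst e) x \<and> (\<exists>j\<in>set (i#is). fst e ! j < x ! j)"
    using rr e0 e1 by auto
  ultimately show ?case using rr IH by simp
qed

definition inv :: "nat \<Rightarrow> pe_state \<Rightarrow> bool" where
  "inv k st \<longleftrightarrow> (case st of (S, P, tr) \<Rightarrow>
     (\<forall>y\<in>S. length y = k) \<and> (\<forall>y\<in>S. \<forall>p\<in>P. \<not> leqk p y)
     \<and> (\<forall>e\<in>set tr. snd e \<longrightarrow> (\<exists>p\<in>P. leqk p (fst e))) \<and> good tr)"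

lemma inv_step:
  assumes "pe_step N k f st st'" "inv k st"
  shows "inv k st'"
  using assms
proof (induction rule: pe_step.induct)
  case (feasible_pick x S x' tr1 P tr)
  have I: "\<forall>y\<in>S. length y = k" "\<forall>y\<in>S. \<forall>p\<in>P. \<not> leqk p y"
     "\<forall>e\<in>set tr. snd e \<longrightarrow> (\<exists>p\<in>P. leqk p (fst e))" "good tr"
    using feasible_pick(4) by (auto simp: inv_def)
  have lx: "length x = k" using I feasible_pick(1) by auto
  have SP: "length x' = length x \<and> leqk x' x \<and> (\<forall>e\<in>set tr1. leqk (fst e) x \<and> (\<exists>j\<in>set [0..<length x]. fst e ! j < x ! j))
   \<and> (\<forall>e\<in>set tr1. snd e \<longrightarrow> leqk x' (fst e)) \<and> good tr1"
  proof -
    have "set [0..<length x] \<subseteq> {..<length x}" by auto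
    from spp_prop[of "[0..<length x]" x f x' tr1, OF distinct_upt this] feasible_pick(3)
    show ?thesis by (simp add: search_pareto_point_def)
  qed
  let ?S' = "maximal_elems (split_set k x' S)"
  have new: "length z = k \<and> (\<forall>p\<in>insert x' P. \<not> leqk p z)" if z: "z \<in> ?S'" for z
  proof -
    have "z \<in> split_set k x' S" using z by (simp add: maximal_elems_def)
    then consider (a) "z \<in> S" "\<not> leqk x' z"
      | (b) y i where "z = y[i := x'!i - 1]" "y \<in> S" "leqk x' y" "i < k" "x'!i > 0"
      unfolding split_set_def by blast
    then show ?thesis
    proof cases
      case a then show ?thesis using I by auto
    next
      case b
      have ly: "length y = k" using b I by auto
      have lz: "length z = k" using b ly by simp
      have "z ! i < x' ! i" using b ly by simp
      then have n1: "\<not> leqk x' z" using b lx SP by (intro not_leqk) auto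
      have "leqk z y" unfolding b(1) using b(3) b(4) ly
        by (intro leqk_upd) (auto simp: leqk_def)
      then have "\<forall>p\<in>P. \<not> leqk p z" using I b leqk_trans by blast
      then show ?thesis using n1 lz by auto
    qed
  qed
  have g1: "good (tr @ [(x, True)])"
  proof (rule good_append[OF I(4)])
    show "good [(x, True)]" by (simp add: good_def)
  next
    fix e w assume "e \<in> set tr" "snd e" "w \<in> set [(x, True)]"
    then obtain p where p: "p \<in> P" "leqk p (fst e)" "fst w = x" using I by auto
    moreover have "\<not> leqk p x" using I(2) feasible_pick(1) p(1) by blast
    ultimately show "\<not> leqk (fst e) (fst w)" using leqk_trans by metis
  qed
  have g2: "good ((tr @ [(x, True)]) @ tr1)"
  proof (rule good_append[OF g1])
    show "good tr1" using SP by simp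
  next
    fix e w assume e: "e \<in> set (tr @ [(x, True)])" "snd e" and w: "w \<in> set tr1"
    have wx1: "leqk (fst w) x" "\<exists>j\<in>set [0..<length x]. fst w ! j < x ! j" using SP w by blast+
    have wx: "leqk (fst w) x" "\<exists>j<length x. fst w ! j < x ! j"
    proof -
      obtain j where j: "j \<in> set [0..<length x]" "fst w ! j < x ! j" using wx1 by blast
      have "j < length x" using j(1) by simp
      then show "leqk (fst w) x" "\<exists>j<length x. fst w ! j < x ! j" using j wx1 by blast+
    qed
    show "\<not> leqk (fst e) (fst w)"
    proof (cases "e \<in> set tr")
      case True
      then obtain p where "p \<in> P" "leqk p (fst e)" using I e by blast
      moreover have "\<not> leqk p x" using I(2) feasible_pick(1) \<open>p \<in> P\<close> by blast
      ultimately show ?thesis using wx(1) leqk_trans by metis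
    next
      case False
      then have "e = (x, True)" using e by auto
      then show ?thesis using wx(2) not_leqk by (metis fst_conv)
    qed
  qed
  have tt: "\<forall>e\<in>set (tr @ [(x, True)] @ tr1). snd e \<longrightarrow> (\<exists>p\<in>insert x' P. leqk p (fst e))"
    using I SP by auto
  show ?case unfolding inv_def using new tt g2 by auto
next
  case (infeasible_pick x S P tr)
  have I: "\<forall>y\<in>S. length y = k" "\<forall>y\<in>S. \<forall>p\<in>P. \<not> leqk p y"
     "\<forall>e\<in>set tr. snd e \<longrightarrow> (\<exists>p\<in>P. leqk p (fst e))" "good tr"
    using infeasible_pick(3) by (auto simp: inv_def)
  have g1: "good (tr @ [(x, False)])"
  proof (rule good_append[OF I(4)])
    show "good [(x, False)]" by (simp add: good_def)
  next
    fix e w assume "e \<in> set tr" "snd e" "w \<in> set [(x, False)]"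
    then obtain p where p: "p \<in> P" "leqk p (fst e)" "fst w = x" using I by auto
    moreover have "\<not> leqk p x" using I(2) infeasible_pick(1) p(1) by blast
    ultimately show "\<not> leqk (fst e) (fst w)" using leqk_trans by metis
  qed
  show ?case unfolding inv_def using I g1 by auto
qed

theorem lemma4:
  fixes N k :: nat and f :: "nat list \<Rightarrow> bool"
    and S P :: "nat list set" and tr :: "(nat list \<times> bool) list"
  assumes "k \<ge> 1"
    and "feasible N k f"
    and "(pe_step N k f)\<^sup>*\<^sup>* (pe_init N k) (S, P, tr)"
    and "i < j" and "j < length tr"
    and "snd (tr ! i)"
  shows "\<not> leqk (fst (tr ! i)) (fst (tr ! j))"
proof -
  have "inv k (pe_init N k)" by (simp add: inv_def pe_init_def good_def)
  have "inv k (S, P, tr)"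
    using assms(3) \<open>inv k (pe_init N k)\<close>
    by (induction rule: rtranclp_induct) (auto intro: inv_step)
  then have "good tr" by (simp add: inv_def)
  then show ?thesis using assms(4-6) by (simp add: good_def)
qed

end
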